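(* Let $\mathcal{H}$ be a complex Hilbert space and $B\in\mathcal{B}(\mathcal{H})$. Then for every $0\le\alpha\le1$, $$w^4(B)\le\frac{1+\alpha}{8}\big\||B|^4+|B^*|^4\big\|+\frac{1-\alpha}{4}w^2(B^2)+\frac14\big\||B|^2+|B^*|^2\big\|\,w(B^2).$$
   Context: $\mathcal{B}(\mathcal{H})$ is the algebra of bounded linear operators on $\mathcal{H}$ with operator norm $\|\cdot\|$. For $A\in\mathcal{B}(\mathcal{H})$, $A^*$ is the adjoint, $|A|=(A^*A)^{1/2}$, $|A^*|=(AA^* )^{1/2}$, and $w(A)=\sup_{\|x\|=1}|\langle Ax,x\rangle|$ is the numerical radius. *)

theory Defs
  imports "HOL-Analysis.Analysis"
begin

class complex_hilbert = banach +
  fixes scaleC :: "complex \<Rightarrow> 'a \<Rightarrow> 'a"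
    and cinner :: "'a \<Rightarrow> 'a \<Rightarrow> complex"
  assumes scaleC_add_right: "scaleC a (x + y) = scaleC a x + scaleC a y"
    and scaleC_add_left: "scaleC (a + b) x = scaleC a x + scaleC b x"
    and scaleC_scaleC: "scaleC a (scaleC b x) = scaleC (a * b) x"
    and scaleC_of_real: "scaleC (of_real r) x = scaleR r x"
    and cinner_add_left: "cinner (x + y) z = cinner x z + cinner y z"
    and cinner_scaleC_left: "cinner (scaleC a x) y = a * cinner x y"
    and cinner_commute: "cinner x y = cnj (cinner y x)"
    and cinner_pos: "0 \<le> Re (cinner x x)"
    and cinner_eq_zero_iff: "cinner x x = 0 \<longleftrightarrow> x = 0"
    and norm_eq_sqrt_cinner: "norm x = sqrt (Re (cinner x x))"

definition bounded_op :: "('a::complex_hilbert \<Rightarrow> 'a) \<Rightarrow> bool" where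
  "bounded_op A \<longleftrightarrow> (\<forall>x y. A (x + y) = A x + A y) \<and> (\<forall>c x. A (scaleC c x) = scaleC c (A x))
     \<and> (\<exists>K. \<forall>x. norm (A x) \<le> norm x * K)"

definition is_adjoint :: "('a::complex_hilbert \<Rightarrow> 'a) \<Rightarrow> ('a \<Rightarrow> 'a) \<Rightarrow> bool" where
  "is_adjoint A As \<longleftrightarrow> (\<forall>x y. cinner (A x) y = cinner x (As y))"

text \<open>Numerical radius (the 0 only matters for the trivial space, where it gives w = 0).\<close>
definition numrad :: "('a::complex_hilbert \<Rightarrow> 'a) \<Rightarrow> real" where
  "numrad A = Sup (insert 0 {cmod (cinner (A x) x) | x. norm x = 1})"

end

theory Submission
  imports Defs
begin


lemma cinner_add_right: "cinner (x::'a::complex_hilbert) (y+z) = cinner x y + cinner x z"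
  by (metis cinner_commute cinner_add_left complex_cnj_add)
lemma cinner_scaleC_right: "cinner (x::'a::complex_hilbert) (scaleC a y) = cnj a * cinner x y"
  by (metis cinner_commute cinner_scaleC_left complex_cnj_mult complex_cnj_cnj)
lemma cinner_zero_left[simp]: "cinner (0::'a::complex_hilbert) y = 0"
  using cinner_add_left[of "0::'a" 0 y] by simp
lemma cinner_zero_right[simp]: "cinner (y::'a::complex_hilbert) 0 = 0"
  by (metis cinner_commute cinner_zero_left complex_cnj_zero)
lemma cinner_minus_left: "cinner (- x::'a::complex_hilbert) y = - cinner x y"
  using cinner_add_left[of x "-x" y] by (simp add: add_eq_0_iff)
lemma cinner_diff_left: "cinner (x - z::'a::complex_hilbert) y = cinner x y - cinner z y"
  using cinner_add_left[of x "-z" y] cinner_minus_left[of z y] by simp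
lemma cinner_diff_right: "cinner (y::'a::complex_hilbert) (x - z) = cinner y x - cinner y z"
  by (metis cinner_commute cinner_diff_left complex_cnj_diff)
lemma scaleC_one[simp]: "scaleC 1 (x::'a::complex_hilbert) = x"
  using scaleC_of_real[of 1 x] by simp
lemma cinner_self: "cinner (x::'a::complex_hilbert) x = complex_of_real ((norm x)^2)"
proof -
  have "Im (cinner x x) = 0" using cinner_commute[of x x] by (metis cnj.sel(2) equation_minus_iff minus_equation_iff neg_equal_zero)
  moreover have "Re (cinner x x) = (norm x)^2" using norm_eq_sqrt_cinner[of x] cinner_pos[of x] by simp
  ultimately show ?thesis by (simp add: complex_eq_iff)
qed
lemma cmod_cinner_self: "cmod (cinner (x::'a::complex_hilbert) x) = (norm x)^2"
  by (simp add: cinner_self norm_power)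

lemma cauchy_schwarz: "cmod (cinner (x::'a::complex_hilbert) y) \<le> norm x * norm y"
proof (cases "y = 0")
  case True then show ?thesis by simp
next
  case False
  hence ny: "norm y > 0" by simp
  have yy: "cinner y y \<noteq> 0" using False cinner_eq_zero_iff by blast
  define t where "t = cinner x y / cinner y y"
  define z where "z = x - scaleC t y"
  have zy: "cinner z y = 0" unfolding z_def t_def using yy
    by (simp add: cinner_diff_left cinner_scaleC_left)
  have yz: "cinner y z = 0" using zy cinner_commute[of y z] by simp
  have xz: "x = z + scaleC t y" unfolding z_def by simp
  have "cinner x x = cinner z z + t * cnj t * cinner y y"
    unfolding xz by (simp add: cinner_add_left cinner_add_right cinner_scaleC_left cinner_scaleC_right zy yz)
  hence "Re (cinner x x) = Re (cinner z z + t * cnj t * cinner y y)" by simp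
  moreover have ct: "cmod t * cmod t = Re t * Re t + Im t * Im t" using cmod_power2[of t] by (simp add: power2_eq_square)
  ultimately have "(norm x)^2 = (norm z)^2 + (cmod t)^2 * (norm y)^2"
    by (simp add: cinner_self complex_mult_cnj power2_eq_square)
  hence "(cmod t)^2 * (norm y)^2 \<le> (norm x)^2" by simp
  moreover have "cmod t = cmod (cinner x y) / (norm y)^2"
    unfolding t_def by (simp add: norm_divide cmod_cinner_self)
  ultimately have "(cmod (cinner x y))^2 / (norm y)^2 \<le> (norm x)^2"
    using ny by (simp add: power_divide power2_eq_square)
  hence "(cmod (cinner x y))^2 \<le> (norm x * norm y)^2"
    using ny by (simp add: divide_le_eq power_mult_distrib)
  then show ?thesis by (rule power2_le_imp_le) simp
qed


lemma buzano:
  fixes a b e :: "'a::complex_hilbert"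
  assumes "norm e = 1"
  shows "2 * cmod (cinner a e * cinner e b) \<le> norm a * norm b + cmod (cinner a b)"
proof -
  define \<beta> where "\<beta> = cinner b e"
  define u where "u = scaleC (2*\<beta>) e - b"
  have ee: "cinner e e = 1" using assms by (simp add: cinner_self)
  have eb: "cinner e b = cnj \<beta>" unfolding \<beta>_def by (rule cinner_commute)
  have au: "cinner a u = 2 * cnj \<beta> * cinner a e - cinner a b"
    unfolding u_def by (simp add: cinner_diff_right cinner_scaleC_right)
  have key: "2 * (cinner a e * cinner e b) = cinner a u + cinner a b"
    using au eb by (simp add: algebra_simps)
  have "cinner u u = cinner b b"
    unfolding u_def using ee eb
    by (simp add: cinner_diff_right cinner_diff_left cinner_scaleC_right cinner_scaleC_left \<beta>_def algebra_simps)
  hence nu: "norm u = norm b" by (simp add: norm_eq_sqrt_cinner)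
  have "2 * cmod (cinner a e * cinner e b) = cmod (cinner a u + cinner a b)"
    using key by (metis norm_mult norm_numeral)
  also have "\<dots> \<le> cmod (cinner a u) + cmod (cinner a b)" by (rule norm_triangle_ineq)
  also have "\<dots> \<le> norm a * norm b + cmod (cinner a b)"
    using cauchy_schwarz[of a u] nu by simp
  finally show ?thesis .
qed

lemma arith_main:
  fixes p q r sv w N2 N4 \<alpha> :: real
  assumes "0 \<le> p" "0 \<le> q" "0 \<le> r" "0 \<le> sv" "0 \<le> \<alpha>" "\<alpha> \<le> 1"
    "2 * sv^2 \<le> p*q + r" "r \<le> p*q" "p^4+q^4 \<le> N4" "p^2+q^2 \<le> N2" "r \<le> w"
  shows "sv^4 \<le> (1+\<alpha>)/8*N4 + (1-\<alpha>)/4*w^2 + 1/4*N2*w"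
proof -
  have "(sv^2)^2 \<le> ((p*q+r)/2)^2"
    by (rule power_mono) (use assms in auto)
  hence h1: "sv^4 \<le> ((p*q)^2 + 2*(p*q)*r + r^2)/4"
    by (simp add: power2_eq_square algebra_simps power4_eq_xxxx)
  have "2*(p*q) \<le> p^2+q^2" using sum_squares_ge_zero[of "p-q" 0]
    by (simp add: power2_eq_square algebra_simps)
  hence h2: "2*(p*q)*r \<le> N2*w"
    by (intro mult_mono) (use assms in auto)
  have "2*(p*q)^2 \<le> p^4+q^4" using sum_squares_ge_zero[of "p^2-q^2" 0]
    by (simp add: power2_eq_square algebra_simps power4_eq_xxxx)
  hence h3: "2*(p*q)^2 \<le> N4" using assms by linarith
  have h4: "r^2 \<le> (p*q)^2" by (rule power_mono) (use assms in auto)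
  have h5: "r^2 \<le> w^2" by (rule power_mono) (use assms in auto)
  have a4: "\<alpha>*r^2 \<le> \<alpha>*(p*q)^2" using h4 assms by (simp add: mult_left_mono)
  have a5: "(1-\<alpha>)*r^2 \<le> (1-\<alpha>)*w^2" using h5 assms by (simp add: mult_left_mono)
  have a3: "\<alpha>*(2*(p*q)^2) \<le> \<alpha>*N4" using h3 assms by (simp add: mult_left_mono)
  have a3': "(1-\<alpha>)*(2*(p*q)^2) \<le> (1-\<alpha>)*N4" using h3 assms by (simp add: mult_left_mono)
  show ?thesis using h1 h2 a3 a3' a4 a5 by (simp add: algebra_simps) argo
qed



lemma bounded_op_bound:
  assumes "bounded_op (A::'a::complex_hilbert \<Rightarrow> 'a)"
  obtains K where "K \<ge> 0" "\<And>x. norm (A x) \<le> norm x * K"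
proof -
  obtain K where K: "\<And>x. norm (A x) \<le> norm x * K" using assms unfolding bounded_op_def by blast
  have "norm (A x) \<le> norm x * max 0 K" for x
    using K[of x] by (smt (verit) mult_left_mono norm_ge_zero)
  then show ?thesis using that[of "max 0 K"] by simp
qed

lemma bounded_op_linear:
  assumes "bounded_op (A::'a::complex_hilbert \<Rightarrow> 'a)"
  shows "bounded_linear A"
proof -
  obtain K where K: "\<And>x. norm (A x) \<le> norm x * K" using assms unfolding bounded_op_def by blast
  show ?thesis
  proof (rule bounded_linear_intro[of _ K])
    show "A (x + y) = A x + A y" for x y using assms unfolding bounded_op_def by blast
    show "A (scaleR r x) = scaleR r (A x)" for r x
      using assms unfolding bounded_op_def by (metis scaleC_of_real)
  qed (rule K)
qed

lemma adj2:
  assumes "is_adjoint B Bs"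
  shows "cinner (Bs x) y = cinner x (B y)"
  using assms unfolding is_adjoint_def by (metis cinner_commute)

lemma cinner_ext:
  fixes u v :: "'a::complex_hilbert"
  assumes "\<And>z. cinner z u = cinner z v" shows "u = v"
proof -
  have "cinner (u - v) (u - v) = 0" using assms by (simp add: cinner_diff_right)
  thus ?thesis using cinner_eq_zero_iff[of "u - v"] by simp
qed

lemma adjoint_bounded_op:
  assumes B: "bounded_op (B::'a::complex_hilbert \<Rightarrow> 'a)" and adj: "is_adjoint B Bs"
  shows "bounded_op Bs"
proof -
  obtain K where K0: "K \<ge> 0" and K: "\<And>x. norm (B x) \<le> norm x * K" using bounded_op_bound[OF B] by blast
  have add: "Bs (x + y) = Bs x + Bs y" for x y
    by (rule cinner_ext) (metis adj is_adjoint_def cinner_add_right)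
  have sc: "Bs (scaleC c x) = scaleC c (Bs x)" for c x
    by (rule cinner_ext) (metis adj is_adjoint_def cinner_scaleC_right)
  have bd: "norm (Bs y) \<le> norm y * K" for y
  proof -
    have "(norm (Bs y))^2 = Re (cinner (Bs y) (Bs y))" by (simp add: cinner_self)
    also have "\<dots> = Re (cinner (B (Bs y)) y)" using adj unfolding is_adjoint_def by simp
    also have "\<dots> \<le> cmod (cinner (B (Bs y)) y)" by (rule complex_Re_le_cmod)
    also have "\<dots> \<le> norm (B (Bs y)) * norm y" by (rule cauchy_schwarz)
    also have "\<dots> \<le> norm (Bs y) * K * norm y" using K by (simp add: mult_right_mono)
    finally have h: "norm (Bs y) * norm (Bs y) \<le> norm (Bs y) * (norm y * K)" by (simp add: power2_eq_square algebra_simps)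
    show ?thesis
    proof (cases "norm (Bs y) = 0")
      case True then show ?thesis using K0 by simp
    next
      case False then show ?thesis using h by (simp add: mult_le_cancel_left)
    qed
  qed
  show ?thesis unfolding bounded_op_def using add sc bd by blast
qed

lemma Re_le_onorm:
  assumes "bounded_linear T" "norm (x::'a::complex_hilbert) = 1"
  shows "Re (cinner (T x) x) \<le> onorm T"
proof -
  have "Re (cinner (T x) x) \<le> cmod (cinner (T x) x)" by (rule complex_Re_le_cmod)
  also have "\<dots> \<le> norm (T x) * norm x" by (rule cauchy_schwarz)
  also have "\<dots> \<le> onorm T" using onorm[OF assms(1), of x] assms(2) by simp
  finally show ?thesis .
qed

lemma numrad_upper:
  assumes "\<And>x. norm (A x) \<le> norm x * K" "norm (x::'a::complex_hilbert) = 1"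
  shows "cmod (cinner (A x) x) \<le> numrad A"
proof -
  have "bdd_above (insert 0 {cmod (cinner (A x) x) |x. norm x = 1})"
  proof (rule bdd_aboveI[of _ "max 0 K"])
    fix y assume "y \<in> insert 0 {cmod (cinner (A x) x) |x. norm x = 1}"
    then consider "y = 0" | z where "norm z = 1" "y = cmod (cinner (A z) z)" by blast
    then show "y \<le> max 0 K"
    proof cases
      case 2
      have "y \<le> norm (A z) * norm z" using 2 cauchy_schwarz[of "A z" z] by simp
      also have "\<dots> \<le> K" using assms(1)[of z] 2 by simp
      finally show ?thesis by simp
    qed simp
  qed
  moreover have "cmod (cinner (A x) x) \<in> insert 0 {cmod (cinner (A x) x) |x. norm x = 1}" using assms(2) by blast
  ultimately show ?thesis unfolding numrad_def by (intro cSup_upper)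
qed

lemma numrad_nonneg:
  assumes "\<And>x. norm (A x) \<le> norm x * K"
  shows "0 \<le> numrad (A::'a::complex_hilbert \<Rightarrow> 'a)"
proof -
  have "bdd_above (insert 0 {cmod (cinner (A x) x) |x. norm x = 1})"
  proof (rule bdd_aboveI[of _ "max 0 K"])
    fix y assume "y \<in> insert 0 {cmod (cinner (A x) x) |x. norm x = 1}"
    then consider "y = 0" | z where "norm z = 1" "y = cmod (cinner (A z) z)" by blast
    then show "y \<le> max 0 K"
    proof cases
      case 2
      have "y \<le> norm (A z) * norm z" using 2 cauchy_schwarz[of "A z" z] by simp
      also have "\<dots> \<le> K" using assms(1)[of z] 2 by simp
      finally show ?thesis by simp
    qed simp
  qed
  then show ?thesis unfolding numrad_def by (intro cSup_upper) simp_all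
qed

lemma numrad_le:
  assumes "0 \<le> c" "\<And>x. norm (x::'a::complex_hilbert) = 1 \<Longrightarrow> cmod (cinner (A x) x) \<le> c"
  shows "numrad A \<le> c"
  unfolding numrad_def by (rule cSup_least) (use assms in auto)



theorem mainTheorem11:
  fixes B Bs :: "'a::complex_hilbert \<Rightarrow> 'a" and \<alpha> :: real
  assumes "bounded_op B"
    and "is_adjoint B Bs"
    and "0 \<le> \<alpha>" and "\<alpha> \<le> 1"
  shows "numrad B ^ 4 \<le>
      (1 + \<alpha>) / 8 * onorm (\<lambda>x. Bs (B (Bs (B x))) + B (Bs (B (Bs x))))
    + (1 - \<alpha>) / 4 * numrad (B \<circ> B) ^ 2
    + 1 / 4 * onorm (\<lambda>x. Bs (B x) + B (Bs x)) * numrad (B \<circ> B)"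
proof -
  note adj = assms(2)
  have adj1: "cinner (B x) y = cinner x (Bs y)" for x y using adj unfolding is_adjoint_def by blast
  have adj2': "cinner (Bs x) y = cinner x (B y)" for x y using adj2[OF adj] .
  obtain K where K0: "K \<ge> 0" and K: "\<And>x. norm (B x) \<le> norm x * K"
    using bounded_op_bound[OF assms(1)] by blast
  have bBs: "bounded_op Bs" by (rule adjoint_bounded_op[OF assms(1) adj])
  have lB: "bounded_linear B" by (rule bounded_op_linear[OF assms(1)])
  have lBs: "bounded_linear Bs" by (rule bounded_op_linear[OF bBs])
  have l2: "bounded_linear (\<lambda>x. Bs (B x) + B (Bs x))"
    by (intro bounded_linear_add bounded_linear_compose[OF lBs lB] bounded_linear_compose[OF lB lBs])
  have l4: "bounded_linear (\<lambda>x. Bs (B (Bs (B x))) + B (Bs (B (Bs x))))"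
    by (intro bounded_linear_add bounded_linear_compose[OF lBs] bounded_linear_compose[OF lB] lB lBs)
  have KK: "norm ((B \<circ> B) x) \<le> norm x * (K * K)" for x
  proof -
    have "norm (B (B x)) \<le> norm (B x) * K" by (rule K)
    also have "\<dots> \<le> norm x * K * K" using K[of x] K0 by (simp add: mult_right_mono)
    finally show ?thesis by (simp add: mult.assoc)
  qed
  define N2 where "N2 = onorm (\<lambda>x. Bs (B x) + B (Bs x))"
  define N4 where "N4 = onorm (\<lambda>x. Bs (B (Bs (B x))) + B (Bs (B (Bs x))))"
  define w where "w = numrad (B \<circ> B)"
  define R where "R = (1 + \<alpha>) / 8 * N4 + (1 - \<alpha>) / 4 * w ^ 2 + 1 / 4 * N2 * w"
  have N2pos: "0 \<le> N2" unfolding N2_def by (rule onorm_pos_le[OF l2])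
  have N4pos: "0 \<le> N4" unfolding N4_def by (rule onorm_pos_le[OF l4])
  have wpos: "0 \<le> w" unfolding w_def by (rule numrad_nonneg[OF KK])
  have Rpos: "0 \<le> R" unfolding R_def using N2pos N4pos wpos assms(3,4) by simp
  have pt: "cmod (cinner (B x) x) ^ 4 \<le> R" if x1: "norm x = 1" for x
  proof -
    define p where "p = norm (B x)"
    define q where "q = norm (Bs x)"
    define r where "r = cmod (cinner (B (B x)) x)"
    define s where "s = cmod (cinner (B x) x)"
    have bz: "2 * cmod (cinner (B x) x * cinner x (Bs x)) \<le> norm (B x) * norm (Bs x) + cmod (cinner (B x) (Bs x))"
      by (rule buzano[OF x1])
    have e1: "cinner x (Bs x) = cinner (B x) x" using adj1 by simp
    have e2: "cinner (B x) (Bs x) = cinner (B (B x)) x" using adj1 by simp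
    have h1: "2 * s^2 \<le> p * q + r" using bz unfolding e1 e2 p_def q_def r_def s_def
      by (simp add: norm_mult power2_eq_square)
    have h2: "r \<le> p * q" unfolding r_def p_def q_def e2[symmetric] by (rule cauchy_schwarz)
    have c2: "cinner (Bs (B x) + B (Bs x)) x = cinner (B x) (B x) + cinner (Bs x) (Bs x)"
      by (simp add: cinner_add_left adj1 adj2')
    have h3: "p^2 + q^2 \<le> N2"
      using Re_le_onorm[OF l2 x1] unfolding N2_def c2 p_def q_def by (simp add: cinner_self)
    have p2: "p^2 \<le> norm (Bs (B x))"
    proof -
      have "p^2 = Re (cinner (Bs (B x)) x)" by (simp add: p_def adj2' cinner_self)
      also have "\<dots> \<le> cmod (cinner (Bs (B x)) x)" by (rule complex_Re_le_cmod)
      also have "\<dots> \<le> norm (Bs (B x))" using cauchy_schwarz[of "Bs (B x)" x] x1 by simp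
      finally show ?thesis .
    qed
    have q2: "q^2 \<le> norm (B (Bs x))"
    proof -
      have "q^2 = Re (cinner (B (Bs x)) x)" by (simp add: q_def adj1 cinner_self)
      also have "\<dots> \<le> cmod (cinner (B (Bs x)) x)" by (rule complex_Re_le_cmod)
      also have "\<dots> \<le> norm (B (Bs x))" using cauchy_schwarz[of "B (Bs x)" x] x1 by simp
      finally show ?thesis .
    qed
    have p4: "p^4 \<le> (norm (Bs (B x)))^2"
      using power_mono[OF p2, of 2] by (simp add: power_mult[symmetric])
    have q4: "q^4 \<le> (norm (B (Bs x)))^2"
      using power_mono[OF q2, of 2] by (simp add: power_mult[symmetric])
    have c4: "cinner (Bs (B (Bs (B x))) + B (Bs (B (Bs x)))) x
        = cinner (Bs (B x)) (Bs (B x)) + cinner (B (Bs x)) (B (Bs x))"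
      by (simp add: cinner_add_left adj1 adj2')
    have "(norm (Bs (B x)))^2 + (norm (B (Bs x)))^2 \<le> N4"
      using Re_le_onorm[OF l4 x1] unfolding N4_def c4 by (simp add: cinner_self)
    hence h4: "p^4 + q^4 \<le> N4" using p4 q4 by linarith
    have h5: "r \<le> w" unfolding r_def w_def using numrad_upper[OF KK x1] by (simp add: o_def)
    have "s^4 \<le> R" unfolding R_def
      by (rule arith_main[OF _ _ _ _ assms(3,4) h1 h2 h4 h3 h5]) (simp_all add: p_def q_def r_def s_def)
    thus ?thesis by (simp add: s_def)
  qed
  have "numrad B \<le> root 4 R"
  proof (rule numrad_le)
    show "0 \<le> root 4 R" using Rpos by simp
    fix x :: 'a assume x1: "norm x = 1"
    have "cmod (cinner (B x) x) = root 4 (cmod (cinner (B x) x) ^ 4)" by (simp add: real_root_power_cancel)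
    also have "\<dots> \<le> root 4 R" using pt[OF x1] by simp
    finally show "cmod (cinner (B x) x) \<le> root 4 R" .
  qed
  hence "numrad B ^ 4 \<le> root 4 R ^ 4"
    by (rule power_mono) (rule numrad_nonneg[OF K])
  also have "\<dots> = R" using Rpos by (simp add: real_root_pow_pos2)
  finally show ?thesis unfolding R_def N2_def N4_def w_def .
qed

end
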